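(* Let $\mathcal X$ be a finite-dimensional operator system and $\mathcal X_0\subsetneq\mathcal X$ a proper operator subsystem. Then $\mathrm{Ind}_{\mathrm{CP}}(\mathcal X:\mathcal X_0)>1$.
   Context: For an operator system $\mathcal X$ with unit $1$, $\mathrm{CP}(\mathcal X)$ denotes the completely positive maps $\mathcal X\to\mathcal X$ and $\mathrm{CP}_1(\mathcal X)$ the set of $\varphi\in\mathrm{CP}(\mathcal X)$ with $\varphi(\mathbb C1)\subset\mathbb C1$. For an operator subsystem $\mathcal X_0\subset\mathcal X$, $\mathrm{Ind}_{\mathrm{CP}}(\mathcal X:\mathcal X_0)=\inf\{\|\varphi(1)\|:\varphi\in\mathrm{CP}_1(\mathcal X),\ \varphi(\mathcal X)\subset\mathcal X_0,\ \varphi-\mathrm{id}_{\mathcal X}\in\mathrm{CP}(\mathcal X)\}$ ($\infty$ if empty). *)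

theory Defs
  imports "HOL-Analysis.Analysis"
begin

text \<open>A finite-dimensional complex vector space is modelled (up to linear isomorphism)
as complex^'d with 'd a finite type. Matrices over it are functions nat => nat => _ ,
an n x n matrix being one that vanishes outside indices < n.
An abstract operator system (Choi--Effros) is given by an involution, a unit e and
matrix cones C n.\<close>

definition mat_n :: "nat \<Rightarrow> (nat \<Rightarrow> nat \<Rightarrow> 'b::zero) set" where
  "mat_n n = {M. \<forall>i j. (n \<le> i \<or> n \<le> j) \<longrightarrow> M i j = 0}"

definition madj :: "('v \<Rightarrow> 'v) \<Rightarrow> nat \<Rightarrow> (nat \<Rightarrow> nat \<Rightarrow> 'v) \<Rightarrow> (nat \<Rightarrow> nat \<Rightarrow> 'v::zero)" where
  "madj star n M = (\<lambda>i j. if i < n \<and> j < n then star (M j i) else 0)"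

text \<open>A^* M A for a scalar n x m matrix A and M in M_n(X).\<close>
definition mcongr :: "nat \<Rightarrow> nat \<Rightarrow> (nat \<Rightarrow> nat \<Rightarrow> complex) \<Rightarrow> (nat \<Rightarrow> nat \<Rightarrow> complex^'d)
    \<Rightarrow> (nat \<Rightarrow> nat \<Rightarrow> complex^'d)" where
  "mcongr n m A M = (\<lambda>k l. if k < m \<and> l < m
      then (\<Sum>i<n. \<Sum>j<n. (cnj (A i k) * A j l) *s M i j) else 0)"

definition mdiag :: "nat \<Rightarrow> 'v \<Rightarrow> (nat \<Rightarrow> nat \<Rightarrow> 'v::zero)" where
  "mdiag n x = (\<lambda>i j. if i = j \<and> i < n then x else 0)"

definition operator_system ::
  "(complex^'d \<Rightarrow> complex^'d) \<Rightarrow> complex^'d \<Rightarrow> (nat \<Rightarrow> (nat \<Rightarrow> nat \<Rightarrow> complex^'d) set) \<Rightarrow> bool" where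
  "operator_system star e C \<longleftrightarrow>
     (\<forall>x y. star (x + y) = star x + star y) \<and>
     (\<forall>c x. star (c *s x) = cnj c *s star x) \<and>
     (\<forall>x. star (star x) = x) \<and>
     star e = e \<and>
     (\<forall>n. C n \<subseteq> {M \<in> mat_n n. madj star n M = M}) \<and>
     (\<forall>n M N. M \<in> C n \<longrightarrow> N \<in> C n \<longrightarrow> (\<lambda>i j. M i j + N i j) \<in> C n) \<and>
     (\<forall>n M (r::real). M \<in> C n \<longrightarrow> r \<ge> 0 \<longrightarrow> (\<lambda>i j. complex_of_real r *s M i j) \<in> C n) \<and>
     (\<forall>n m A M. M \<in> C n \<longrightarrow> mcongr n m A M \<in> C m) \<and>
     (\<forall>n M. M \<in> C n \<longrightarrow> (\<lambda>i j. - M i j) \<in> C n \<longrightarrow> M = (\<lambda>i j. 0)) \<and>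
     (\<forall>n H. H \<in> mat_n n \<longrightarrow> madj star n H = H \<longrightarrow>
        (\<exists>r>0. (\<lambda>i j. complex_of_real r *s mdiag n e i j + H i j) \<in> C n)) \<and>
     (\<forall>n H. H \<in> mat_n n \<longrightarrow> madj star n H = H \<longrightarrow>
        (\<forall>r>0. (\<lambda>i j. complex_of_real r *s mdiag n e i j + H i j) \<in> C n) \<longrightarrow> H \<in> C n)"

definition operator_subsystem ::
  "(complex^'d \<Rightarrow> complex^'d) \<Rightarrow> complex^'d \<Rightarrow> (complex^'d) set \<Rightarrow> bool" where
  "operator_subsystem star e X0 \<longleftrightarrow>
     0 \<in> X0 \<and> (\<forall>x\<in>X0. \<forall>y\<in>X0. x + y \<in> X0) \<and> (\<forall>c. \<forall>x\<in>X0. c *s x \<in> X0) \<and>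
     e \<in> X0 \<and> (\<forall>x\<in>X0. star x \<in> X0)"

definition clinear_map :: "(complex^'d \<Rightarrow> complex^'d) \<Rightarrow> bool" where
  "clinear_map \<phi> \<longleftrightarrow> (\<forall>x y. \<phi> (x + y) = \<phi> x + \<phi> y) \<and> (\<forall>c x. \<phi> (c *s x) = c *s \<phi> x)"

definition CP_map :: "(nat \<Rightarrow> (nat \<Rightarrow> nat \<Rightarrow> complex^'d) set) \<Rightarrow> (complex^'d \<Rightarrow> complex^'d) \<Rightarrow> bool" where
  "CP_map C \<phi> \<longleftrightarrow> clinear_map \<phi> \<and> (\<forall>n M. M \<in> C n \<longrightarrow> (\<lambda>i j. \<phi> (M i j)) \<in> C n)"

definition os_norm ::
  "(complex^'d \<Rightarrow> complex^'d) \<Rightarrow> complex^'d \<Rightarrow> (nat \<Rightarrow> (nat \<Rightarrow> nat \<Rightarrow> complex^'d) set) \<Rightarrow> complex^'d \<Rightarrow> real" where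
  "os_norm star e C x = Inf {r::real. r \<ge> 0 \<and>
      (\<lambda>i j. if i = 0 \<and> j = 0 then complex_of_real r *s e
             else if i = 0 \<and> j = 1 then x
             else if i = 1 \<and> j = 0 then star x
             else if i = 1 \<and> j = 1 then complex_of_real r *s e else 0) \<in> C 2}"

definition Ind_CP ::
  "(complex^'d \<Rightarrow> complex^'d) \<Rightarrow> complex^'d \<Rightarrow> (nat \<Rightarrow> (nat \<Rightarrow> nat \<Rightarrow> complex^'d) set) \<Rightarrow> (complex^'d) set \<Rightarrow> ereal" where
  "Ind_CP star e C X0 = Inf (ereal ` {os_norm star e C (\<phi> e) | \<phi>.
      CP_map C \<phi> \<and> (\<forall>c. \<exists>c'. \<phi> (c *s e) = c' *s e) \<and> range \<phi> \<subseteq> X0 \<and> CP_map C (\<lambda>x. \<phi> x - x)})"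

end

theory Submission
  imports Defs
begin

lemma scaleR_eq_smult: "r *\<^sub>R (x::complex^'d) = complex_of_real r *s x"
  unfolding vec_eq_iff by (simp add: scaleR_conv_of_real[where 'a=complex])

locale osys =
  fixes star :: "complex^'d \<Rightarrow> complex^'d" and e :: "complex^'d"
    and C :: "nat \<Rightarrow> (nat \<Rightarrow> nat \<Rightarrow> complex^'d) set"
  assumes os: "operator_system star e C"
begin

definition P where "P = {y. mdiag 1 y \<in> C 1}"

lemma ax:
  "\<forall>x y. star (x + y) = star x + star y"
  "\<forall>c x. star (c *s x) = cnj c *s star x"
  "\<forall>x. star (star x) = x"
  "star e = e"
  "\<forall>n. C n \<subseteq> {M \<in> mat_n n. madj star n M = M}"
  "\<forall>n M N. M \<in> C n \<longrightarrow> N \<in> C n \<longrightarrow> (\<lambda>i j. M i j + N i j) \<in> C n"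
  "\<forall>n M (r::real). M \<in> C n \<longrightarrow> r \<ge> 0 \<longrightarrow> (\<lambda>i j. complex_of_real r *s M i j) \<in> C n"
  "\<forall>n m A M. M \<in> C n \<longrightarrow> mcongr n m A M \<in> C m"
  "\<forall>n M. M \<in> C n \<longrightarrow> (\<lambda>i j. - M i j) \<in> C n \<longrightarrow> M = (\<lambda>i j. 0)"
  "\<forall>n H. H \<in> mat_n n \<longrightarrow> madj star n H = H \<longrightarrow>
        (\<exists>r>0. (\<lambda>i j. complex_of_real r *s mdiag n e i j + H i j) \<in> C n)"
  "\<forall>n H. H \<in> mat_n n \<longrightarrow> madj star n H = H \<longrightarrow>
        (\<forall>r>0. (\<lambda>i j. complex_of_real r *s mdiag n e i j + H i j) \<in> C n) \<longrightarrow> H \<in> C n"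
  apply (insert os[unfolded operator_system_def])
  apply (elim conjE; assumption)+
  done

lemma star_add: "star (x + y) = star x + star y" using ax(1) by blast
lemma star_smult: "star (c *s x) = cnj c *s star x" using ax(2) by blast
lemma star_star: "star (star x) = x" using ax(3) by blast
lemma star_e: "star e = e" using ax(4) .
lemma star_0: "star 0 = 0" using star_add[of 0 0] by simp
lemma star_minus: "star (- x) = - star x"
  using star_add[of x "-x"] star_0 by (simp add: add_eq_0_iff2)
lemma star_diff: "star (x - y) = star x - star y"
  using star_add[of x "-y"] star_minus by simp

lemma mdiag1_fun: "(\<lambda>i j. f (mdiag 1 x i j)) = mdiag 1 (f x)" if "f 0 = 0"
  using that by (auto simp: mdiag_def fun_eq_iff)

lemma P_sa: "y \<in> P \<Longrightarrow> star y = y"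
proof -
  assume "y \<in> P"
  then have "mdiag 1 y \<in> C 1" by (simp add: P_def)
  then have "madj star 1 (mdiag 1 y) = mdiag 1 y" using ax(5) by blast
  then have "madj star 1 (mdiag 1 y) 0 0 = mdiag 1 y 0 0" by simp
  then show ?thesis by (simp add: madj_def mdiag_def)
qed

lemma P_add: "x \<in> P \<Longrightarrow> y \<in> P \<Longrightarrow> x + y \<in> P"
proof -
  assume "x \<in> P" "y \<in> P"
  then have "(\<lambda>i j. mdiag 1 x i j + mdiag 1 y i j) \<in> C 1"
    using ax(6,7) unfolding P_def by blast
  moreover have "(\<lambda>i j. mdiag 1 x i j + mdiag 1 y i j) = mdiag 1 (x+y)"
    by (auto simp: mdiag_def fun_eq_iff)
  ultimately show ?thesis by (simp add: P_def)
qed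

lemma P_scale: "x \<in> P \<Longrightarrow> r \<ge> 0 \<Longrightarrow> complex_of_real r *s x \<in> P"
proof -
  assume "x \<in> P" "r \<ge> 0"
  then have "(\<lambda>i j. complex_of_real r *s mdiag 1 x i j) \<in> C 1"
    using ax(6,7) unfolding P_def by blast
  moreover have "(\<lambda>i j. complex_of_real r *s mdiag 1 x i j) = mdiag 1 (complex_of_real r *s x)"
    by (auto simp: mdiag_def fun_eq_iff)
  ultimately show ?thesis by (simp add: P_def)
qed

lemma P_pointed: "x \<in> P \<Longrightarrow> - x \<in> P \<Longrightarrow> x = 0"
proof -
  assume "x \<in> P" "- x \<in> P"
  moreover have "(\<lambda>i j. - mdiag 1 x i j) = mdiag 1 (-x)"
    by (auto simp: mdiag_def fun_eq_iff)
  ultimately have "(\<lambda>i j. - mdiag 1 x i j) \<in> C 1" "mdiag 1 x \<in> C 1" unfolding P_def by simp_all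
  then have "mdiag 1 x = (\<lambda>i j. 0)"
    using ax(9) by blast
  then have "mdiag 1 x 0 0 = 0" by simp
  then show ?thesis by (simp add: mdiag_def)
qed

lemma mdiag_mat: "mdiag 1 x \<in> mat_n 1" by (simp add: mdiag_def mat_n_def)
lemma madj_mdiag: "star x = x \<Longrightarrow> madj star 1 (mdiag 1 x) = mdiag 1 x"
  by (auto simp: madj_def mdiag_def fun_eq_iff star_0)

lemma mdiag_comb: "(\<lambda>i j. complex_of_real r *s mdiag 1 e i j + mdiag 1 H i j) = mdiag 1 (complex_of_real r *s e + H)"
  by (auto simp: mdiag_def fun_eq_iff)

lemma P_unit: "star H = H \<Longrightarrow> \<exists>r>0. complex_of_real r *s e + H \<in> P"
proof -
  assume "star H = H"
  then have "\<exists>r>0. (\<lambda>i j. complex_of_real r *s mdiag 1 e i j + mdiag 1 H i j) \<in> C 1"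
    using ax(10) mdiag_mat madj_mdiag by blast
  then show ?thesis unfolding mdiag_comb P_def by blast
qed

lemma P_arch: "star H = H \<Longrightarrow> (\<And>r. r > 0 \<Longrightarrow> complex_of_real r *s e + H \<in> P) \<Longrightarrow> H \<in> P"
proof -
  assume sa: "star H = H" and h: "\<And>r. r > 0 \<Longrightarrow> complex_of_real r *s e + H \<in> P"
  have "\<forall>r>0. (\<lambda>i j. complex_of_real r *s mdiag 1 e i j + mdiag 1 H i j) \<in> C 1"
    unfolding mdiag_comb using h unfolding P_def by blast
  then have "mdiag 1 H \<in> C 1"
    using ax(11) mdiag_mat[of H] madj_mdiag[OF sa] by blast
  then show ?thesis by (simp add: P_def)
qed

lemma e_P: "e \<in> P"
proof -
  obtain r where r: "r > 0" "complex_of_real r *s e + 0 \<in> P" using P_unit[of 0] star_0 by blast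
  then have "complex_of_real (1/r) *s (complex_of_real r *s e) \<in> P" using P_scale[of "complex_of_real r *s e" "1/r"] by simp
  moreover have "complex_of_real (1/r) *s (complex_of_real r *s e) = e"
    using r(1) by (simp add: vector_smult_assoc)
  ultimately show ?thesis by simp
qed

end

context osys begin

lemma star_scaleR: "star (r *\<^sub>R x) = r *\<^sub>R star x"
  by (simp add: scaleR_eq_smult star_smult)

lemma star_sum: "star (sum f A) = (\<Sum>j\<in>A. star (f j))"
  by (induction A rule: infinite_finite_induct) (simp_all add: star_0 star_add)

lemma P_scaleR: "x \<in> P \<Longrightarrow> r \<ge> 0 \<Longrightarrow> r *\<^sub>R x \<in> P"
  by (simp add: scaleR_eq_smult P_scale)

lemma P_0: "0 \<in> P" using P_scaleR[OF e_P, of 0] by simp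

lemma P_sum: "(\<And>j. j \<in> A \<Longrightarrow> f j \<in> P) \<Longrightarrow> sum f A \<in> P"
  by (induction A rule: infinite_finite_induct) (simp_all add: P_0 P_add)

lemma P_mono_e: "r *\<^sub>R e + x \<in> P \<Longrightarrow> r \<le> r' \<Longrightarrow> r' *\<^sub>R e + x \<in> P"
proof -
  assume a: "r *\<^sub>R e + x \<in> P" "r \<le> r'"
  have "(r *\<^sub>R e + x) + (r' - r) *\<^sub>R e \<in> P" using a by (simp add: P_add P_scaleR e_P)
  moreover have "(r *\<^sub>R e + x) + (r' - r) *\<^sub>R e = r' *\<^sub>R e + x" by (simp add: algebra_simps)
  ultimately show ?thesis by simp
qed

lemma P_unitR: "star H = H \<Longrightarrow> \<exists>r>0. r *\<^sub>R e + H \<in> P"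
  using P_unit by (simp add: scaleR_eq_smult)

lemma P_archR: "star H = H \<Longrightarrow> (\<And>r. r > 0 \<Longrightarrow> r *\<^sub>R e + H \<in> P) \<Longrightarrow> H \<in> P"
  using P_arch by (simp add: scaleR_eq_smult)

lemma P_unit2: "star x = x \<Longrightarrow> \<exists>r>0. r *\<^sub>R e + x \<in> P \<and> r *\<^sub>R e - x \<in> P"
proof -
  assume sa: "star x = x"
  obtain r1 where r1: "r1 > 0" "r1 *\<^sub>R e + x \<in> P" using P_unitR[OF sa] by blast
  have "star (-x) = -x" using sa star_minus by simp
  then obtain r2 where r2: "r2 > 0" "r2 *\<^sub>R e + (-x) \<in> P" using P_unitR by blast
  have "(r1 + r2) *\<^sub>R e + x \<in> P" using P_mono_e[OF r1(2)] r2(1) by simp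
  moreover have "(r1 + r2) *\<^sub>R e + (-x) \<in> P" using P_mono_e[OF r2(2)] r1(1) by simp
  ultimately show ?thesis using r1(1) r2(1) by (intro exI[of _ "r1+r2"]) simp
qed

lemma P_abs: "r *\<^sub>R e + x \<in> P \<Longrightarrow> r *\<^sub>R e - x \<in> P \<Longrightarrow> (\<bar>a\<bar> * r) *\<^sub>R e + a *\<^sub>R x \<in> P"
proof (cases "a \<ge> 0")
  case True
  assume "r *\<^sub>R e + x \<in> P"
  then have "a *\<^sub>R (r *\<^sub>R e + x) \<in> P" using True P_scaleR by blast
  then show ?thesis using True by (simp add: algebra_simps)
next
  case False
  assume "r *\<^sub>R e - x \<in> P"
  moreover have "-a \<ge> 0" using False by simp
  ultimately have "(-a) *\<^sub>R (r *\<^sub>R e - x) \<in> P" by (rule P_scaleR)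
  moreover have "(\<bar>a\<bar> * r) *\<^sub>R e + a *\<^sub>R x = (-a) *\<^sub>R (r *\<^sub>R e - x)"
    using False by (simp add: algebra_simps)
  ultimately show ?thesis by simp
qed

definition bb :: "'d \<Rightarrow> complex^'d" where "bb j = axis j 1"
definition uu where "uu j = bb j + star (bb j)"
definition vv where "vv j = \<i> *s bb j - \<i> *s star (bb j)"

lemma uu_sa: "star (uu j) = uu j"
  by (simp add: uu_def star_add star_star add.commute)
lemma vv_sa: "star (vv j) = vv j"
  by (simp add: vv_def star_diff star_smult star_star)

lemma decomp_scalar: "a * p + cnj a * q = complex_of_real (Re a) * (p + q) + complex_of_real (Im a) * (\<i> * p - \<i> * q)"
  by (simp add: complex_eq_iff algebra_simps)

lemma decomp_term: "a *s x + cnj a *s star x = Re a *\<^sub>R (x + star x) + Im a *\<^sub>R (\<i> *s x - \<i> *s star x)"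
  unfolding vec_eq_iff
  by (simp add: scaleR_conv_of_real[where 'a=complex] decomp_scalar)

lemma decomp: "star w = w \<Longrightarrow> w = (\<Sum>j\<in>UNIV. (Re (w$j) / 2) *\<^sub>R uu j + (Im (w$j) / 2) *\<^sub>R vv j)"
proof -
  assume sa: "star w = w"
  have w: "w = (\<Sum>j\<in>UNIV. w$j *s bb j)" unfolding bb_def by (rule basis_expansion[symmetric])
  have sw0: "star (\<Sum>j\<in>UNIV. w$j *s bb j) = (\<Sum>j\<in>UNIV. cnj (w$j) *s star (bb j))"
    by (simp add: star_sum star_smult)
  have sw: "star w = (\<Sum>j\<in>UNIV. cnj (w$j) *s star (bb j))"
    by (subst (1) w) (rule sw0)
  have ws: "w + star w = (\<Sum>j\<in>UNIV. w$j *s bb j) + (\<Sum>j\<in>UNIV. cnj (w$j) *s star (bb j))"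
    using arg_cong2[where f="(+)", OF w sw] .
  have "w = (1/2::real) *\<^sub>R (w + star w)" using sa by (simp add: scaleR_2[symmetric])
  also have "\<dots> = (1/2::real) *\<^sub>R (\<Sum>j\<in>UNIV. w$j *s bb j + cnj (w$j) *s star (bb j))"
    unfolding ws by (simp add: sum.distrib)
  also have "\<dots> = (\<Sum>j\<in>UNIV. (1/2::real) *\<^sub>R (Re (w$j) *\<^sub>R uu j + Im (w$j) *\<^sub>R vv j))"
    by (simp add: scaleR_sum_right decomp_term uu_def vv_def)
  also have "\<dots> = (\<Sum>j\<in>UNIV. (Re (w$j) / 2) *\<^sub>R uu j + (Im (w$j) / 2) *\<^sub>R vv j)"
    by (simp add: algebra_simps)
  finally show ?thesis .
qed

end

context osys begin

lemma P_mono2: "r *\<^sub>R e + x \<in> P \<and> r *\<^sub>R e - x \<in> P \<Longrightarrow> r \<le> r' \<Longrightarrow> r' *\<^sub>R e + x \<in> P \<and> r' *\<^sub>R e - x \<in> P"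
  using P_mono_e[of r x r'] P_mono_e[of r "-x" r'] by simp

lemma core: "\<exists>K>0. \<forall>w. star w = w \<longrightarrow> (K * norm w) *\<^sub>R e + w \<in> P"
proof -
  have "\<forall>j. \<exists>r>0. r *\<^sub>R e + uu j \<in> P \<and> r *\<^sub>R e - uu j \<in> P" using P_unit2 uu_sa by blast
  then obtain ru where ru: "\<And>j. ru j > 0 \<and> ru j *\<^sub>R e + uu j \<in> P \<and> ru j *\<^sub>R e - uu j \<in> P" by metis
  have "\<forall>j. \<exists>r>0. r *\<^sub>R e + vv j \<in> P \<and> r *\<^sub>R e - vv j \<in> P" using P_unit2 vv_sa by blast
  then obtain rv where rv: "\<And>j. rv j > 0 \<and> rv j *\<^sub>R e + vv j \<in> P \<and> rv j *\<^sub>R e - vv j \<in> P" by metis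
  define R where "R = (\<Sum>j\<in>UNIV. ru j + rv j)"
  have Rge: "ru j \<le> R \<and> rv j \<le> R" for j
  proof -
    have "ru j + rv j \<le> R" unfolding R_def
      by (rule member_le_sum) (auto intro: add_nonneg_nonneg less_imp_le ru[THEN conjunct1] rv[THEN conjunct1])
    then show ?thesis using ru[of j] rv[of j] by auto
  qed
  have Ru: "R *\<^sub>R e + uu j \<in> P \<and> R *\<^sub>R e - uu j \<in> P" for j
    using P_mono2[OF conjunct2[OF ru[of j]]] Rge by blast
  have Rv: "R *\<^sub>R e + vv j \<in> P \<and> R *\<^sub>R e - vv j \<in> P" for j
    using P_mono2[OF conjunct2[OF rv[of j]]] Rge by blast
  have R0: "R \<ge> 0" unfolding R_def by (rule sum_nonneg) (metis ru rv add_pos_pos less_imp_le)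
  define K where "K = real CARD('d) * R + 1"
  have K0: "K > 0" unfolding K_def using R0 mult_nonneg_nonneg[OF of_nat_0_le_iff[of "CARD('d)"] R0] by linarith
  have "(K * norm w) *\<^sub>R e + w \<in> P" if sa: "star w = w" for w
  proof -
    define a where "a j = Re (w$j) / 2" for j
    define c where "c j = Im (w$j) / 2" for j
    define t where "t j = ((\<bar>a j\<bar> * R) *\<^sub>R e + a j *\<^sub>R uu j) + ((\<bar>c j\<bar> * R) *\<^sub>R e + c j *\<^sub>R vv j)" for j
    have tP: "t j \<in> P" for j
      unfolding t_def using P_abs[of R "uu j" "a j"] P_abs[of R "vv j" "c j"] Ru[of j] Rv[of j]
      by (simp add: P_add)
    define S where "S = (\<Sum>j\<in>UNIV. \<bar>a j\<bar> * R + \<bar>c j\<bar> * R)"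
    have sumt: "(\<Sum>j\<in>UNIV. t j) = S *\<^sub>R e + w"
    proof -
      have "(\<Sum>j\<in>UNIV. t j) = (\<Sum>j\<in>UNIV. (\<bar>a j\<bar> * R + \<bar>c j\<bar> * R) *\<^sub>R e) + (\<Sum>j\<in>UNIV. a j *\<^sub>R uu j + c j *\<^sub>R vv j)"
        unfolding t_def by (simp add: sum.distrib algebra_simps scaleR_add_left)
      also have "(\<Sum>j\<in>UNIV. a j *\<^sub>R uu j + c j *\<^sub>R vv j) = w"
        using decomp[OF sa] unfolding a_def c_def by simp
      also have "(\<Sum>j\<in>UNIV. (\<bar>a j\<bar> * R + \<bar>c j\<bar> * R) *\<^sub>R e) = S *\<^sub>R e"
        unfolding S_def by (simp add: scaleR_sum_left)
      finally show ?thesis .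
    qed
    have Sle: "S \<le> K * norm w"
    proof -
      have "\<bar>a j\<bar> * R + \<bar>c j\<bar> * R \<le> norm w * R" for j
      proof -
        have "\<bar>Re (w$j)\<bar> \<le> norm (w$j)" "\<bar>Im (w$j)\<bar> \<le> norm (w$j)" by (simp_all add: abs_Re_le_cmod abs_Im_le_cmod)
        moreover have "norm (w$j) \<le> norm w" by (rule Finite_Cartesian_Product.norm_nth_le)
        ultimately have "\<bar>a j\<bar> + \<bar>c j\<bar> \<le> norm w" unfolding a_def c_def by simp
        then have "(\<bar>a j\<bar> + \<bar>c j\<bar>) * R \<le> norm w * R" using R0 by (rule mult_right_mono)
        then show ?thesis by (simp add: algebra_simps)
      qed
      then have "S \<le> (\<Sum>j\<in>(UNIV::'d set). norm w * R)" unfolding S_def by (rule sum_mono)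
      also have "\<dots> = real CARD('d) * R * norm w" by simp
      also have "\<dots> \<le> K * norm w" unfolding K_def by (simp add: algebra_simps)
      finally show ?thesis .
    qed
    have "(\<Sum>j\<in>UNIV. t j) + (K * norm w - S) *\<^sub>R e \<in> P"
      using P_sum[of UNIV t] tP P_scaleR[OF e_P, of "K * norm w - S"] Sle by (simp add: P_add)
    moreover have "(\<Sum>j\<in>UNIV. t j) + (K * norm w - S) *\<^sub>R e = (K * norm w) *\<^sub>R e + w"
      unfolding sumt by (simp add: algebra_simps)
    ultimately show ?thesis by simp
  qed
  then show ?thesis using K0 by blast
qed

end

context osys begin

lemma star_blin: "bounded_linear star"
proof -
  have "linear star" by (rule linearI) (simp_all add: star_add star_scaleR)
  then show ?thesis using linear_conv_bounded_linear by blast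
qed

lemma P_closed:
  assumes lim: "x \<longlonglongrightarrow> x0" and ev: "eventually (\<lambda>n. x n \<in> P) sequentially" and sa: "star x0 = x0"
  shows "x0 \<in> P"
proof (rule P_archR[OF sa])
  fix r :: real assume r: "r > 0"
  obtain K where K: "K > 0" "\<And>w. star w = w \<Longrightarrow> (K * norm w) *\<^sub>R e + w \<in> P" using core by blast
  have rK: "r / K > 0" using r K(1) by simp
  have "eventually (\<lambda>n. dist (x n) x0 < r / K) sequentially"
    using lim rK unfolding tendsto_iff by blast
  with ev have "eventually (\<lambda>n. x n \<in> P \<and> dist (x n) x0 < r / K) sequentially"
    by (rule eventually_conj)
  then obtain N where "\<forall>n\<ge>N. x n \<in> P \<and> dist (x n) x0 < r / K" unfolding eventually_sequentially by blast
  then obtain n where n: "x n \<in> P" "dist (x n) x0 < r / K" by blast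
  define d where "d = x0 - x n"
  have dsa: "star d = d" unfolding d_def using sa P_sa[OF n(1)] by (simp add: star_diff)
  have "norm d < r / K" using n(2) by (simp add: d_def dist_norm norm_minus_commute)
  then have Kd: "K * norm d < r" using K(1) by (simp add: field_simps)
  have "x n + ((K * norm d) *\<^sub>R e + d) + (r - K * norm d) *\<^sub>R e \<in> P"
    using n(1) K(2)[OF dsa] P_scaleR[OF e_P, of "r - K * norm d"] Kd by (simp add: P_add)
  moreover have "x n + ((K * norm d) *\<^sub>R e + d) + (r - K * norm d) *\<^sub>R e = r *\<^sub>R e + x0"
    unfolding d_def by (simp add: algebra_simps)
  ultimately show "r *\<^sub>R e + x0 \<in> P" by simp
qed

lemma seg: "e - y \<in> P \<Longrightarrow> 0 \<le> s \<Longrightarrow> s \<le> 1 \<Longrightarrow> e - s *\<^sub>R y \<in> P"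
proof -
  assume a: "e - y \<in> P" "0 \<le> s" "s \<le> 1"
  have "(1 - s) *\<^sub>R e + s *\<^sub>R (e - y) \<in> P" using a by (simp add: P_add P_scaleR e_P)
  moreover have "(1 - s) *\<^sub>R e + s *\<^sub>R (e - y) = e - s *\<^sub>R y" by (simp add: algebra_simps)
  ultimately show ?thesis by simp
qed

lemma S_bounded: "\<exists>B. \<forall>y. star y = y \<and> e - y \<in> P \<and> e + y \<in> P \<longrightarrow> norm y \<le> B"
proof (rule ccontr)
  assume "\<not> ?thesis"
  note nb = this
  have "\<forall>n::nat. \<exists>y. star y = y \<and> e - y \<in> P \<and> e + y \<in> P \<and> norm y > real n"
  proof
    fix n :: nat
    from nb obtain y where "\<not> (star y = y \<and> e - y \<in> P \<and> e + y \<in> P \<longrightarrow> norm y \<le> real n)" by blast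
    then show "\<exists>y. star y = y \<and> e - y \<in> P \<and> e + y \<in> P \<and> norm y > real n" by (auto simp: not_le)
  qed
  then have "\<exists>y. \<forall>n::nat. star (y n) = y n \<and> e - y n \<in> P \<and> e + y n \<in> P \<and> norm (y n) > real n"
    by (rule choice)
  then obtain y where y: "\<And>n. star (y n) = y n \<and> e - y n \<in> P \<and> e + y n \<in> P \<and> norm (y n) > real n"
    by blast
  define z where "z n = (1 / norm (y n)) *\<^sub>R y n" for n
  have ypos: "norm (y n) > 0" for n using y[of n] of_nat_0_le_iff[of n] by linarith
  have zn: "norm (z n) = 1" for n unfolding z_def using ypos[of n] by simp
  have zsa: "star (z n) = z n" for n unfolding z_def using y[of n] by (simp add: star_scaleR)
  have zP: "e - t *\<^sub>R z n \<in> P \<and> e + t *\<^sub>R z n \<in> P" if "0 \<le> t" "t \<le> real n" for t n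
  proof -
    define s where "s = t / norm (y n)"
    have s: "0 \<le> s" "s \<le> 1" unfolding s_def using that y[of n] ypos[of n] by (simp_all add: field_simps)
    have tz: "t *\<^sub>R z n = s *\<^sub>R y n" unfolding z_def s_def by simp
    have "e - (-1) *\<^sub>R y n \<in> P" using y[of n] by simp
    then have "e - s *\<^sub>R ((-1) *\<^sub>R y n) \<in> P" using seg s by blast
    then have "e + s *\<^sub>R y n \<in> P" by simp
    moreover have "e - s *\<^sub>R y n \<in> P" using seg y[of n] s by blast
    ultimately show ?thesis using tz by simp
  qed
  have "seq_compact (sphere (0::complex^'d) 1)" by (rule compact_imp_seq_compact) (rule compact_sphere)
  moreover have "\<forall>n. z n \<in> sphere 0 1" using zn by simp
  ultimately obtain z0 \<sigma> where z0: "z0 \<in> sphere 0 1" "strict_mono \<sigma>" "(z \<circ> \<sigma>) \<longlonglongrightarrow> z0"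
    by (rule seq_compactE)
  have "(\<lambda>n. star ((z \<circ> \<sigma>) n)) \<longlonglongrightarrow> star z0"
    using bounded_linear.tendsto[OF star_blin z0(3)] .
  then have "(z \<circ> \<sigma>) \<longlonglongrightarrow> star z0" using zsa by (simp add: o_def)
  then have z0sa: "star z0 = z0" using z0(3) LIMSEQ_unique by blast
  have both: "e - t *\<^sub>R z0 \<in> P \<and> e + t *\<^sub>R z0 \<in> P" if t: "t > 0" for t
  proof -
    have ev: "eventually (\<lambda>n. e - t *\<^sub>R (z \<circ> \<sigma>) n \<in> P \<and> e + t *\<^sub>R (z \<circ> \<sigma>) n \<in> P) sequentially"
    proof (rule eventually_sequentiallyI[of "nat \<lceil>t\<rceil>"])
      fix n assume "nat \<lceil>t\<rceil> \<le> n"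
      then have "t \<le> real n" by linarith
      also have "real n \<le> real (\<sigma> n)" using seq_suble[OF z0(2)] by simp
      finally show "e - t *\<^sub>R (z \<circ> \<sigma>) n \<in> P \<and> e + t *\<^sub>R (z \<circ> \<sigma>) n \<in> P"
        using zP t by simp
    qed
    have l1: "(\<lambda>n. e - t *\<^sub>R (z \<circ> \<sigma>) n) \<longlonglongrightarrow> e - t *\<^sub>R z0"
      by (intro tendsto_intros z0(3))
    have l2: "(\<lambda>n. e + t *\<^sub>R (z \<circ> \<sigma>) n) \<longlonglongrightarrow> e + t *\<^sub>R z0"
      by (intro tendsto_intros z0(3))
    have s1: "star (e - t *\<^sub>R z0) = e - t *\<^sub>R z0" by (simp add: star_diff star_e star_scaleR z0sa)
    have s2: "star (e + t *\<^sub>R z0) = e + t *\<^sub>R z0" by (simp add: star_add star_e star_scaleR z0sa)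
    show ?thesis
      using P_closed[OF l1 eventually_mono[OF ev] s1] P_closed[OF l2 eventually_mono[OF ev] s2] by blast
  qed
  have m: "- z0 \<in> P"
  proof (rule P_archR)
    show "star (- z0) = - z0" by (simp add: star_minus z0sa)
    fix r :: real assume r: "r > 0"
    have "r *\<^sub>R (e - (1/r) *\<^sub>R z0) \<in> P" using both[of "1/r"] r P_scaleR by simp
    then show "r *\<^sub>R e + - z0 \<in> P" using r by (simp add: algebra_simps)
  qed
  have p: "z0 \<in> P"
  proof (rule P_archR[OF z0sa])
    fix r :: real assume r: "r > 0"
    have "r *\<^sub>R (e + (1/r) *\<^sub>R z0) \<in> P" using both[of "1/r"] r P_scaleR by simp
    then show "r *\<^sub>R e + z0 \<in> P" using r by (simp add: algebra_simps)
  qed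
  have "z0 = 0" using P_pointed[OF p m] .
  then show False using z0(1) by simp
qed

end

context osys begin

lemma smult_eq0: "c *s x = 0 \<Longrightarrow> x \<noteq> 0 \<Longrightarrow> (c::complex) = 0"
  by (auto simp: vec_eq_iff)

lemma scaleR_e_eq0: "e \<noteq> 0 \<Longrightarrow> r *\<^sub>R e = 0 \<Longrightarrow> r = 0"
  by simp

lemma os_norm_ge:
  assumes e0: "e \<noteq> 0" and c: "c \<ge> 0"
  shows "os_norm star e C (c *\<^sub>R e) \<ge> c"
proof -
  define M where "M r = (\<lambda>(i::nat) (j::nat). if i = 0 \<and> j = 0 then complex_of_real r *s e
             else if i = 0 \<and> j = 1 then c *\<^sub>R e
             else if i = 1 \<and> j = 0 then star (c *\<^sub>R e)
             else if i = 1 \<and> j = 1 then complex_of_real r *s e else 0)" for r :: real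
  define S where "S = {r::real. r \<ge> 0 \<and> M r \<in> C 2}"
  have os_eq: "os_norm star e C (c *\<^sub>R e) = Inf S" unfolding os_norm_def S_def M_def ..
  have "mdiag 1 (c *\<^sub>R e) \<in> C 1" using P_scaleR[OF e_P c] unfolding P_def by simp
  then have "mcongr 1 2 (\<lambda>i k. 1) (mdiag 1 (c *\<^sub>R e)) \<in> C 2" using ax(8) by blast
  moreover have "mcongr 1 2 (\<lambda>i k. 1) (mdiag 1 (c *\<^sub>R e)) = M c"
    unfolding M_def mcongr_def mdiag_def fun_eq_iff
    by (auto simp: star_scaleR star_smult star_e scaleR_eq_smult)
  ultimately have "c \<in> S" using c unfolding S_def by simp
  then have ne: "S \<noteq> {}" by blast
  have lb: "c \<le> r" if "r \<in> S" for r
  proof (rule ccontr)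
    assume "\<not> c \<le> r"
    have "M r \<in> C 2" using that unfolding S_def by simp
    then have "mcongr 2 1 (\<lambda>i k. if i = 0 then 1 else -1) (M r) \<in> C 1" using ax(8) by blast
    moreover have "mcongr 2 1 (\<lambda>i k. if i = 0 then 1 else -1) (M r) = mdiag 1 ((2*r - 2*c) *\<^sub>R e)"
      unfolding M_def mcongr_def mdiag_def fun_eq_iff
      by (auto simp: star_scaleR star_smult star_e scaleR_eq_smult numeral_2_eq_2 lessThan_Suc vec_eq_iff algebra_simps)
    ultimately have p1: "(2*r - 2*c) *\<^sub>R e \<in> P" unfolding P_def by simp
    have p2: "- ((2*r - 2*c) *\<^sub>R e) \<in> P" using P_scaleR[OF e_P, of "2*c - 2*r"] \<open>\<not> c \<le> r\<close>
      by (simp add: algebra_simps)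
    have "(2*r - 2*c) *\<^sub>R e = 0" using P_pointed[OF p1 p2] .
    then show False using e0 \<open>\<not> c \<le> r\<close> by simp
  qed
  show ?thesis unfolding os_eq by (rule cInf_greatest[OF ne lb])
qed

end

context osys begin

lemma main:
  assumes sub: "operator_subsystem star e X0" and ne: "X0 \<noteq> UNIV"
  shows "Ind_CP star e C X0 > 1"
proof -
  have X0_0: "0 \<in> X0" and X0_add: "\<And>x y. x \<in> X0 \<Longrightarrow> y \<in> X0 \<Longrightarrow> x + y \<in> X0"
    and X0_sm: "\<And>c x. x \<in> X0 \<Longrightarrow> c *s x \<in> X0" and X0_star: "\<And>x. x \<in> X0 \<Longrightarrow> star x \<in> X0"
    using sub unfolding operator_subsystem_def by blast+
  obtain x where x: "x \<notin> X0" using ne by blast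
  have "\<exists>h. star h = h \<and> h \<notin> X0"
  proof (rule ccontr)
    assume "\<not> ?thesis"
    then have all: "\<And>h. star h = h \<Longrightarrow> h \<in> X0" by blast
    have h1: "x + star x \<in> X0" by (rule all) (simp add: star_add star_star add.commute)
    have h2: "\<i> *s x - \<i> *s star x \<in> X0" by (rule all) (simp add: star_diff star_smult star_star)
    have "(1/2::complex) *s ((x + star x) + (-\<i>) *s (\<i> *s x - \<i> *s star x)) \<in> X0"
      using h1 h2 X0_sm X0_add by blast
    moreover have "(1/2::complex) *s ((x + star x) + (-\<i>) *s (\<i> *s x - \<i> *s star x)) = x"
      by (simp add: vec_eq_iff algebra_simps)
    ultimately show False using x by simp
  qed
  then obtain h where hsa: "star h = h" and hX: "h \<notin> X0" by blast
  obtain R where R: "R > 0" "R *\<^sub>R e + h \<in> P" "R *\<^sub>R e - h \<in> P" using P_unit2[OF hsa] by blast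
  have e0: "e \<noteq> 0"
  proof
    assume "e = 0"
    then have "h \<in> P" "-h \<in> P" using R by simp_all
    then have "h = 0" by (rule P_pointed)
    then show False using hX X0_0 by simp
  qed
  have "subspace X0" unfolding subspace_def
    using X0_0 X0_add X0_sm by (simp add: scaleR_eq_smult)
  then have clX: "closed X0" by (rule closed_subspace)
  define d where "d = infdist h X0"
  have d0: "d > 0" unfolding d_def using infdist_pos_not_in_closed[OF clX _ hX] X0_0 by blast
  obtain B where B: "\<And>y. star y = y \<Longrightarrow> e - y \<in> P \<Longrightarrow> e + y \<in> P \<Longrightarrow> norm y \<le> B"
    using S_bounded by blast
  define B' where "B' = max B 1"
  have B'0: "B' > 0" unfolding B'_def by simp
  define \<delta> where "\<delta> = d / (R * B')"
  have \<delta>0: "\<delta> > 0" unfolding \<delta>_def using d0 R(1) B'0 by simp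
  have key: "ereal (1 + \<delta>) \<le> z" if zin: "z \<in> ereal ` {os_norm star e C (\<phi> e) | \<phi>.
      CP_map C \<phi> \<and> (\<forall>c. \<exists>c'. \<phi> (c *s e) = c' *s e) \<and> range \<phi> \<subseteq> X0 \<and> CP_map C (\<lambda>x. \<phi> x - x)}" for z
  proof -
    obtain \<phi> where z: "z = ereal (os_norm star e C (\<phi> e))" and cp: "CP_map C \<phi>"
      and sc: "\<forall>c. \<exists>c'. \<phi> (c *s e) = c' *s e" and rg: "range \<phi> \<subseteq> X0" and cpd: "CP_map C (\<lambda>x. \<phi> x - x)"
      using zin by blast
    define \<psi> where "\<psi> = (\<lambda>x. \<phi> x - x)"
    have lin: "clinear_map \<psi>" and pos: "\<And>M. M \<in> C 1 \<Longrightarrow> (\<lambda>i j. \<psi> (M i j)) \<in> C 1"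
      using cpd unfolding CP_map_def \<psi>_def by blast+
    have \<psi>add: "\<psi> (x + y) = \<psi> x + \<psi> y" for x y using lin unfolding clinear_map_def by blast
    have \<psi>sm: "\<psi> (c *s x) = c *s \<psi> x" for c x using lin unfolding clinear_map_def by blast
    have \<psi>0: "\<psi> 0 = 0" using \<psi>sm[of 0 0] by simp
    have \<psi>R: "\<psi> (r *\<^sub>R x) = r *\<^sub>R \<psi> x" for r x using \<psi>sm by (simp add: scaleR_eq_smult)
    have \<psi>m: "\<psi> (- x) = - \<psi> x" for x using \<psi>R[of "-1" x] by simp
    have \<psi>P: "x \<in> P \<Longrightarrow> \<psi> x \<in> P" for x
      using pos[of "mdiag 1 x"] mdiag1_fun[of \<psi> x, OF \<psi>0] unfolding P_def by simp
    obtain c' where c': "\<phi> e = c' *s e" using sc[rule_format, of 1] by auto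
    have \<psi>e: "\<psi> e = (c' - 1) *s e" unfolding \<psi>_def c' by (simp add: vector_sadd_rdistrib vec_eq_iff algebra_simps)
    have "star (\<psi> e) = \<psi> e" using P_sa[OF \<psi>P[OF e_P]] .
    then have "star ((c' - 1) *s e) = (c' - 1) *s e" by (simp only: \<psi>e)
    then have "cnj (c' - 1) *s e = (c' - 1) *s e" by (simp only: star_smult star_e)
    then have "(cnj (c' - 1) - (c' - 1)) *s e = 0" unfolding vector_sub_rdistrib by (simp only: diff_self)
    then have "cnj (c' - 1) - (c' - 1) = 0" by (rule smult_eq0[OF _ e0])
    then have "cnj (c' - 1) = c' - 1" by simp
    then have "Im (c' - 1) = 0" by (simp add: complex_eq_iff)
    define \<mu> where "\<mu> = Re (c' - 1)"
    have cmu: "c' - 1 = complex_of_real \<mu>" unfolding \<mu>_def using \<open>Im (c' - 1) = 0\<close> by (simp add: complex_eq_iff)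
    have \<psi>e': "\<psi> e = \<mu> *\<^sub>R e" using \<psi>e cmu by (simp add: scaleR_eq_smult)
    have \<phi>e: "\<phi> e = (1 + \<mu>) *\<^sub>R e"
    proof -
      have "c' = complex_of_real (1 + \<mu>)" using cmu by (simp add: algebra_simps)
      then show ?thesis using c' by (simp add: scaleR_eq_smult)
    qed
    have hX2: "\<phi> h \<in> X0" using rg by blast
    have nd: "norm (\<psi> h) \<ge> d"
    proof -
      have "d \<le> dist h (\<phi> h)" unfolding d_def by (rule infdist_le[OF hX2])
      also have "\<dots> = norm (\<psi> h)" unfolding \<psi>_def by (simp add: dist_norm norm_minus_commute)
      finally show ?thesis .
    qed
    have eq1: "\<psi> (R *\<^sub>R e + h) = (R * \<mu>) *\<^sub>R e + \<psi> h"
      using \<psi>add[of "R *\<^sub>R e" "h"] \<psi>R[of R e] \<psi>e' by simp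
    have p1: "(R * \<mu>) *\<^sub>R e + \<psi> h \<in> P"
      using \<psi>P[OF R(2)] unfolding eq1 .
    have eq2: "\<psi> (R *\<^sub>R e - h) = (R * \<mu>) *\<^sub>R e - \<psi> h"
      using \<psi>add[of "R *\<^sub>R e" "-h"] \<psi>m[of h] \<psi>R[of R e] \<psi>e' by simp
    have p2: "(R * \<mu>) *\<^sub>R e - \<psi> h \<in> P"
      using \<psi>P[OF R(3)] unfolding eq2 .
    have \<psi>hsa: "star (\<psi> h) = \<psi> h"
      using P_sa[OF p1] by (simp add: star_add star_scaleR star_e)
    have mu0: "\<mu> \<ge> 0"
    proof (rule ccontr)
      assume "\<not> \<mu> \<ge> 0"
      have a1: "\<mu> *\<^sub>R e \<in> P" using \<psi>P[OF e_P] \<psi>e' by simp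
      have a2: "- (\<mu> *\<^sub>R e) \<in> P" using P_scaleR[OF e_P, of "-\<mu>"] \<open>\<not> \<mu> \<ge> 0\<close> by simp
      have "\<mu> *\<^sub>R e = 0" using P_pointed[OF a1 a2] .
      then show False using e0 \<open>\<not> \<mu> \<ge> 0\<close> by simp
    qed
    have mupos: "\<mu> > 0"
    proof (rule ccontr)
      assume "\<not> \<mu> > 0"
      then have "\<mu> = 0" using mu0 by simp
      then have "\<psi> h \<in> P" "- \<psi> h \<in> P" using p1 p2 by simp_all
      then have "\<psi> h = 0" by (rule P_pointed)
      then show False using nd d0 by simp
    qed
    define y where "y = (1 / (R * \<mu>)) *\<^sub>R \<psi> h"
    have Rmu: "R * \<mu> > 0" using R(1) mupos by simp
    have ysa: "star y = y" unfolding y_def using \<psi>hsa by (simp add: star_scaleR)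
    have ey1: "e - y \<in> P"
    proof -
      have "(1 / (R * \<mu>)) *\<^sub>R ((R * \<mu>) *\<^sub>R e - \<psi> h) \<in> P" using P_scaleR[OF p2] Rmu by simp
      moreover have "(1 / (R * \<mu>)) *\<^sub>R ((R * \<mu>) *\<^sub>R e - \<psi> h) = e - y"
        unfolding y_def using R(1) mupos by (simp add: scaleR_diff_right)
      ultimately show ?thesis by simp
    qed
    have ey2: "e + y \<in> P"
    proof -
      have "(1 / (R * \<mu>)) *\<^sub>R ((R * \<mu>) *\<^sub>R e + \<psi> h) \<in> P" using P_scaleR[OF p1] Rmu by simp
      moreover have "(1 / (R * \<mu>)) *\<^sub>R ((R * \<mu>) *\<^sub>R e + \<psi> h) = e + y"
        unfolding y_def using R(1) mupos by (simp add: scaleR_add_right)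
      ultimately show ?thesis by simp
    qed
    have "norm y \<le> B'" using B[OF ysa ey1 ey2] unfolding B'_def by simp
    have "\<psi> h = (R * \<mu>) *\<^sub>R y" unfolding y_def using R(1) mupos by simp
    then have "norm (\<psi> h) = (R * \<mu>) * norm y" using Rmu by simp
    also have "\<dots> \<le> (R * \<mu>) * B'" using \<open>norm y \<le> B'\<close> Rmu by (simp add: mult_left_mono)
    finally have "d \<le> (R * \<mu>) * B'" using nd by linarith
    then have "d \<le> \<mu> * (R * B')" by (simp add: mult_ac)
    then have "\<delta> \<le> \<mu>" unfolding \<delta>_def using R(1) B'0 by (simp add: pos_divide_le_eq)
    moreover have "os_norm star e C (\<phi> e) \<ge> 1 + \<mu>" unfolding \<phi>e using os_norm_ge[OF e0] mu0 by simp
    ultimately show ?thesis unfolding z by simp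
  qed
  have "1 < ereal (1 + \<delta>)" using \<delta>0 by simp
  moreover have "ereal (1 + \<delta>) \<le> Ind_CP star e C X0" unfolding Ind_CP_def by (rule Inf_greatest) (rule key)
  ultimately show ?thesis by (rule less_le_trans)
qed

end

theorem proposition3p2:
  fixes star :: "complex^'d \<Rightarrow> complex^'d" and e :: "complex^'d"
    and C :: "nat \<Rightarrow> (nat \<Rightarrow> nat \<Rightarrow> complex^'d) set" and X0 :: "(complex^'d) set"
  assumes "operator_system star e C"
    and "operator_subsystem star e X0"
    and "X0 \<noteq> UNIV"
  shows "Ind_CP star e C X0 > 1"
proof -
  interpret osys star e C by (rule osys.intro) (rule assms(1))
  show ?thesis by (rule main[OF assms(2,3)])
qed

end
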